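(* There exists a fragile triangle-free graph (i.e., of girth at least $4$) with chromatic number $4$.
   Context: All graphs are finite and simple. A graph is $k$-connected if it has at least $k+1$ vertices and no vertex cutset with at most $k-1$ vertices. A graph is fragile if it has no $3$-connected subgraph. *)

theory Defs
  imports Main
begin

definition simple_graph :: "'a set \<Rightarrow> ('a \<Rightarrow> 'a \<Rightarrow> bool) \<Rightarrow> bool" where
  "simple_graph V E \<longleftrightarrow> finite V \<and> (\<forall>x y. E x y \<longrightarrow> x \<in> V \<and> y \<in> V)
     \<and> (\<forall>x y. E x y \<longrightarrow> E y x) \<and> (\<forall>x. \<not> E x x)"

definition subgraph :: "'a set \<Rightarrow> ('a \<Rightarrow> 'a \<Rightarrow> bool) \<Rightarrow> 'a set \<Rightarrow> ('a \<Rightarrow> 'a \<Rightarrow> bool) \<Rightarrow> bool" where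
  "subgraph W F V E \<longleftrightarrow> simple_graph W F \<and> W \<subseteq> V \<and> (\<forall>x y. F x y \<longrightarrow> E x y)"

definition connected_graph :: "'a set \<Rightarrow> ('a \<Rightarrow> 'a \<Rightarrow> bool) \<Rightarrow> bool" where
  "connected_graph V E \<longleftrightarrow>
     (\<forall>x\<in>V. \<forall>y\<in>V. (\<lambda>u v. u \<in> V \<and> v \<in> V \<and> E u v)\<^sup>*\<^sup>* x y)"

definition k_connected :: "nat \<Rightarrow> 'a set \<Rightarrow> ('a \<Rightarrow> 'a \<Rightarrow> bool) \<Rightarrow> bool" where
  "k_connected k V E \<longleftrightarrow> card V \<ge> k + 1 \<and>
     (\<forall>S. S \<subseteq> V \<and> card S \<le> k - 1 \<longrightarrow> connected_graph (V - S) E)"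

definition fragile :: "'a set \<Rightarrow> ('a \<Rightarrow> 'a \<Rightarrow> bool) \<Rightarrow> bool" where
  "fragile V E \<longleftrightarrow> \<not> (\<exists>W F. subgraph W F V E \<and> k_connected 3 W F)"

definition triangle_free :: "'a set \<Rightarrow> ('a \<Rightarrow> 'a \<Rightarrow> bool) \<Rightarrow> bool" where
  "triangle_free V E \<longleftrightarrow> \<not> (\<exists>x\<in>V. \<exists>y\<in>V. \<exists>z\<in>V. E x y \<and> E y z \<and> E x z)"

definition colorable :: "'a set \<Rightarrow> ('a \<Rightarrow> 'a \<Rightarrow> bool) \<Rightarrow> nat \<Rightarrow> bool" where
  "colorable V E k \<longleftrightarrow> (\<exists>c :: 'a \<Rightarrow> nat. (\<forall>x\<in>V. c x < k) \<and>
     (\<forall>x\<in>V. \<forall>y\<in>V. E x y \<longrightarrow> c x \<noteq> c y))"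

definition chromatic_number :: "'a set \<Rightarrow> ('a \<Rightarrow> 'a \<Rightarrow> bool) \<Rightarrow> nat" where
  "chromatic_number V E = (LEAST k. colorable V E k)"

end

theory Submission
  imports Defs
begin


lemma fragile_small:
  assumes "finite V" "card V \<le> 3"
  shows "fragile V E"
  unfolding fragile_def
proof
  assume "\<exists>W F. subgraph W F V E \<and> k_connected 3 W F"
  then obtain W F where "subgraph W F V E" "k_connected 3 W F" by blast
  then have "W \<subseteq> V" "card W \<ge> 4" unfolding subgraph_def k_connected_def by auto
  with assms card_mono[of V W] show False by linarith
qed

lemma fragile_peel:
  assumes fr: "fragile (V - {x}) E" and nb: "\<And>y. y \<in> V \<Longrightarrow> E x y \<Longrightarrow> y = a \<or> y = b"
  shows "fragile V E"
  unfolding fragile_def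
proof
  assume "\<exists>W F. subgraph W F V E \<and> k_connected 3 W F"
  then obtain W F where sg: "subgraph W F V E" and kc: "k_connected 3 W F" by blast
  show False
  proof (cases "x \<in> W")
    case False
    then have "subgraph W F (V - {x}) E" using sg unfolding subgraph_def by auto
    with kc fr show False unfolding fragile_def by blast
  next
    case True
    define S where "S = {y \<in> W. F x y}"
    have fin: "finite W" using sg unfolding subgraph_def simple_graph_def by auto
    have irr: "\<And>u. \<not> F u u" using sg unfolding subgraph_def simple_graph_def by auto
    have SW: "S \<subseteq> W" unfolding S_def by auto
    have Sab: "S \<subseteq> {a,b}" using nb sg unfolding S_def subgraph_def by auto
    have "card {a,b} \<le> 2" by (simp add: card_insert_if)
    then have cS: "card S \<le> 2" using card_mono[OF _ Sab] by fastforce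
    have conn: "connected_graph (W - S) F" using kc SW cS unfolding k_connected_def by auto
    have c4: "card W \<ge> 4" using kc unfolding k_connected_def by simp
    have xS: "x \<notin> S" using irr unfolding S_def by auto
    have finS: "finite S" using fin SW finite_subset by blast
    have "card (W - S) = card W - card S" using card_Diff_subset[OF finS SW] .
    then have "card (W - S) \<ge> 2" using c4 cS by linarith
    then have "card (W - S - {x}) \<ge> 1" using True xS fin by (simp add: card_Diff_singleton)
    then obtain y where y: "y \<in> W - S - {x}" by (metis One_nat_def card.empty ex_in_conv not_less_eq_eq zero_le)
    have xWS: "x \<in> W - S" using True xS by blast
    let ?R = "\<lambda>u v. u \<in> W - S \<and> v \<in> W - S \<and> F u v"
    have "?R\<^sup>*\<^sup>* x y" using conn xWS y unfolding connected_graph_def by blast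
    then show False
    proof (cases rule: converse_rtranclpE)
      case base then show False using y by blast
    next
      case (step z)
      then show False unfolding S_def by blast
    qed
  qed
qed

lemma fragile_glue:
  assumes fA: "fragile A E" and fB: "fragile B E" and V: "V = A \<union> B"
    and fin: "finite (A \<inter> B)" and c: "card (A \<inter> B) \<le> 2"
    and nc: "\<And>x y. x \<in> A - B \<Longrightarrow> y \<in> B - A \<Longrightarrow> \<not> E x y"
  shows "fragile V E"
  unfolding fragile_def
proof
  assume "\<exists>W F. subgraph W F V E \<and> k_connected 3 W F"
  then obtain W F where sg: "subgraph W F V E" and kc: "k_connected 3 W F" by blast
  have FE: "\<And>u v. F u v \<Longrightarrow> E u v" using sg unfolding subgraph_def by auto
  have WV: "W \<subseteq> V" using sg unfolding subgraph_def by auto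
  have sgW: "simple_graph W F" using sg unfolding subgraph_def by auto
  show False
  proof (cases "W \<subseteq> A")
    case True
    then have "subgraph W F A E" using sg unfolding subgraph_def by auto
    with kc fA show False unfolding fragile_def by blast
  next
    case nA: False
    show False
    proof (cases "W \<subseteq> B")
      case True
      then have "subgraph W F B E" using sg unfolding subgraph_def by auto
      with kc fB show False unfolding fragile_def by blast
    next
      case nB: False
      obtain u where u: "u \<in> W" "u \<notin> A" using nA by blast
      obtain v where v: "v \<in> W" "v \<notin> B" using nB by blast
      define T where "T = W \<inter> (A \<inter> B)"
      have "card T \<le> card (A \<inter> B)" unfolding T_def using fin by (intro card_mono) auto
      then have cT: "card T \<le> 2" using c by linarith
      have conn: "connected_graph (W - T) F" using kc cT unfolding k_connected_def T_def by auto
      let ?R = "\<lambda>p q. p \<in> W - T \<and> q \<in> W - T \<and> F p q"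
      have uT: "u \<in> W - T" using u unfolding T_def by blast
      have vT: "v \<in> W - T" using v unfolding T_def by blast
      have path: "?R\<^sup>*\<^sup>* v u" using conn uT vT unfolding connected_graph_def by blast
      have "\<And>z. ?R\<^sup>*\<^sup>* v z \<Longrightarrow> z \<in> A - B"
      proof -
        fix z assume "?R\<^sup>*\<^sup>* v z"
        then show "z \<in> A - B"
        proof (induction rule: rtranclp_induct)
          case base then show ?case using v WV V by blast
        next
          case (step y z)
          then have yz: "E y z" "z \<in> W" "z \<notin> T" using FE by auto
          have "z \<in> V" using yz WV by blast
          moreover have "z \<notin> B - A" using nc[of y z] step yz by blast
          moreover have "z \<notin> A \<inter> B" using yz unfolding T_def by blast
          ultimately show ?case using V by blast
        qed
      qed
      from this[OF path] u show False by blast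
    qed
  qed
qed


definition EL :: "(nat \<times> nat) list" where "EL = [(0,1), (0,2), (0,4), (1,3), (1,6), (2,3), (2,7), (2,8), (3,5), (4,5), (4,6), (5,11), (5,15), (6,7), (6,8), (7,11), (7,15), (9,10), (9,11), (9,13), (10,12), (10,15), (11,12), (12,14), (13,14), (13,15), (16,7), (16,14), (17,18), (17,19), (17,21), (18,20), (18,23), (19,20), (19,24), (19,25), (20,22), (21,22), (21,23), (22,28), (22,32), (23,24), (23,25), (24,28), (24,32), (26,27), (26,28), (26,30), (27,29), (27,32), (28,29), (29,31), (30,31), (30,32), (33,24), (33,31), (8,25), (8,33), (16,25), (16,33)]"

definition VV :: "nat set" where "VV = {0,1,2,3,4,5,6,7,8,9,10,11,12,13,14,15,16,17,18,19,20,21,22,23,24,25,26,27,28,29,30,31,32,33}"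

definition GE :: "nat \<Rightarrow> nat \<Rightarrow> bool" where
  "GE x y \<longleftrightarrow> (x,y) \<in> set EL \<or> (y,x) \<in> set EL"

lemma peelL:
  assumes "fragile V' GE" "V' = V - {x}"
    "\<forall>(u,w)\<in>set EL. (u = x \<and> w \<in> V \<longrightarrow> w = a \<or> w = b) \<and> (w = x \<and> u \<in> V \<longrightarrow> u = a \<or> u = b)"
  shows "fragile V GE"
proof (rule fragile_peel[where x=x and a=a and b=b])
  show "fragile (V - {x}) GE" using assms by simp
  fix y assume "y \<in> V" "GE x y"
  then show "y = a \<or> y = b" using assms(3) unfolding GE_def by auto
qed

lemma glueL:
  assumes "fragile A GE" "fragile B GE" "V = A \<union> B" "A \<inter> B \<subseteq> S" "card S \<le> 2" "finite S"
    "\<forall>(u,w)\<in>set EL. \<not>(u\<in>A-B \<and> w\<in>B-A) \<and> \<not>(w\<in>A-B \<and> u\<in>B-A)"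
  shows "fragile V GE"
proof (rule fragile_glue[OF assms(1,2,3)])
  show "finite (A \<inter> B)" using assms(4,6) finite_subset by blast
  show "card (A \<inter> B) \<le> 2" using assms(4,5,6) card_mono[of S "A \<inter> B"] by linarith
  fix x y assume "x \<in> A - B" "y \<in> B - A"
  then show "\<not> GE x y" using assms(7) unfolding GE_def by auto
qed

lemma frag_main: "fragile VV GE"
proof -
  have fr16: "fragile {4,6,7} GE" by (rule fragile_small) auto
  have fr15: "fragile {2,4,6,7} GE" by (rule peelL[OF fr16, where x=2 and a=7 and b=7]) (auto simp: EL_def)
  have fr14: "fragile {0,2,4,6,7} GE" by (rule peelL[OF fr15, where x=0 and a=2 and b=4]) (auto simp: EL_def)
  have fr13: "fragile {0,1,2,4,6,7} GE" by (rule peelL[OF fr14, where x=1 and a=0 and b=6]) (auto simp: EL_def)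
  have fr12: "fragile {0,1,2,3,4,6,7} GE" by (rule peelL[OF fr13, where x=3 and a=1 and b=2]) (auto simp: EL_def)
  have fr11: "fragile {0,1,2,3,4,5,6,7} GE" by (rule peelL[OF fr12, where x=5 and a=3 and b=4]) (auto simp: EL_def)
  have fr10: "fragile {0,1,2,3,4,5,6,7,15} GE" by (rule peelL[OF fr11, where x=15 and a=5 and b=7]) (auto simp: EL_def)
  have fr9: "fragile {0,1,2,3,4,5,6,7,13,15} GE" by (rule peelL[OF fr10, where x=13 and a=15 and b=15]) (auto simp: EL_def)
  have fr8: "fragile {0,1,2,3,4,5,6,7,11,13,15} GE" by (rule peelL[OF fr9, where x=11 and a=5 and b=7]) (auto simp: EL_def)
  have fr7: "fragile {0,1,2,3,4,5,6,7,9,11,13,15} GE" by (rule peelL[OF fr8, where x=9 and a=11 and b=13]) (auto simp: EL_def)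
  have fr6: "fragile {0,1,2,3,4,5,6,7,9,10,11,13,15} GE" by (rule peelL[OF fr7, where x=10 and a=9 and b=15]) (auto simp: EL_def)
  have fr5: "fragile {0,1,2,3,4,5,6,7,9,10,11,12,13,15} GE" by (rule peelL[OF fr6, where x=12 and a=10 and b=11]) (auto simp: EL_def)
  have fr4: "fragile {0,1,2,3,4,5,6,7,9,10,11,12,13,14,15} GE" by (rule peelL[OF fr5, where x=14 and a=12 and b=13]) (auto simp: EL_def)
  have fr3: "fragile {0,1,2,3,4,5,6,7,9,10,11,12,13,14,15,16} GE" by (rule peelL[OF fr4, where x=16 and a=14 and b=7]) (auto simp: EL_def)
  have fr2: "fragile {0,1,2,3,4,5,6,7,8,9,10,11,12,13,14,15,16} GE" by (rule peelL[OF fr3, where x=8 and a=2 and b=6]) (auto simp: EL_def)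
  have fr33: "fragile {21,23,24} GE" by (rule fragile_small) auto
  have fr32: "fragile {19,21,23,24} GE" by (rule peelL[OF fr33, where x=19 and a=24 and b=24]) (auto simp: EL_def)
  have fr31: "fragile {17,19,21,23,24} GE" by (rule peelL[OF fr32, where x=17 and a=19 and b=21]) (auto simp: EL_def)
  have fr30: "fragile {17,18,19,21,23,24} GE" by (rule peelL[OF fr31, where x=18 and a=17 and b=23]) (auto simp: EL_def)
  have fr29: "fragile {17,18,19,20,21,23,24} GE" by (rule peelL[OF fr30, where x=20 and a=18 and b=19]) (auto simp: EL_def)
  have fr28: "fragile {17,18,19,20,21,22,23,24} GE" by (rule peelL[OF fr29, where x=22 and a=20 and b=21]) (auto simp: EL_def)
  have fr27: "fragile {17,18,19,20,21,22,23,24,32} GE" by (rule peelL[OF fr28, where x=32 and a=24 and b=22]) (auto simp: EL_def)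
  have fr26: "fragile {17,18,19,20,21,22,23,24,30,32} GE" by (rule peelL[OF fr27, where x=30 and a=32 and b=32]) (auto simp: EL_def)
  have fr25: "fragile {17,18,19,20,21,22,23,24,28,30,32} GE" by (rule peelL[OF fr26, where x=28 and a=24 and b=22]) (auto simp: EL_def)
  have fr24: "fragile {17,18,19,20,21,22,23,24,26,28,30,32} GE" by (rule peelL[OF fr25, where x=26 and a=28 and b=30]) (auto simp: EL_def)
  have fr23: "fragile {17,18,19,20,21,22,23,24,26,27,28,30,32} GE" by (rule peelL[OF fr24, where x=27 and a=32 and b=26]) (auto simp: EL_def)
  have fr22: "fragile {17,18,19,20,21,22,23,24,26,27,28,29,30,32} GE" by (rule peelL[OF fr23, where x=29 and a=27 and b=28]) (auto simp: EL_def)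
  have fr21: "fragile {17,18,19,20,21,22,23,24,26,27,28,29,30,31,32} GE" by (rule peelL[OF fr22, where x=31 and a=29 and b=30]) (auto simp: EL_def)
  have fr20: "fragile {17,18,19,20,21,22,23,24,26,27,28,29,30,31,32,33} GE" by (rule peelL[OF fr21, where x=33 and a=24 and b=31]) (auto simp: EL_def)
  have fr19: "fragile {17,18,19,20,21,22,23,24,25,26,27,28,29,30,31,32,33} GE" by (rule peelL[OF fr20, where x=25 and a=19 and b=23]) (auto simp: EL_def)
  have fr18: "fragile {16,17,18,19,20,21,22,23,24,25,26,27,28,29,30,31,32,33} GE" by (rule peelL[OF fr19, where x=16 and a=25 and b=33]) (auto simp: EL_def)
  have fr17: "fragile {8,16,17,18,19,20,21,22,23,24,25,26,27,28,29,30,31,32,33} GE" by (rule peelL[OF fr18, where x=8 and a=25 and b=33]) (auto simp: EL_def)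
  have fr1: "fragile {0,1,2,3,4,5,6,7,8,9,10,11,12,13,14,15,16,17,18,19,20,21,22,23,24,25,26,27,28,29,30,31,32,33} GE" by (rule glueL[OF fr2 fr17, where S="{8,16}"]) (auto simp: EL_def)
  show ?thesis unfolding VV_def using fr1 .
qed

definition G5L :: "(nat \<times> nat) list" where "G5L = [(0,1), (0,2), (0,4), (1,3), (1,6), (2,3), (2,7), (2,8), (3,5), (4,5), (4,6), (5,11), (5,15), (6,7), (6,8), (7,11), (7,15), (9,10), (9,11), (9,13), (10,12), (10,15), (11,12), (12,14), (13,14), (13,15)]"

lemma G5_rel:
  fixes d :: "nat \<Rightarrow> nat"
  assumes r: "\<forall>i\<in>{0,1,2,3,4,5,6,7,8,9,10,11,12,13,14,15}. d i < 3"
    and p: "\<forall>(a,b)\<in>set G5L. d a \<noteq> d b"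
  shows "d 8 = d 7 \<or> d 8 = d 14"
proof -
  have v0: "d 0 = 0 \<or> d 0 = 1 \<or> d 0 = 2" using r by auto
  have v1: "d 1 = 0 \<or> d 1 = 1 \<or> d 1 = 2" using r by auto
  have v2: "d 2 = 0 \<or> d 2 = 1 \<or> d 2 = 2" using r by auto
  have v3: "d 3 = 0 \<or> d 3 = 1 \<or> d 3 = 2" using r by auto
  have v4: "d 4 = 0 \<or> d 4 = 1 \<or> d 4 = 2" using r by auto
  have v5: "d 5 = 0 \<or> d 5 = 1 \<or> d 5 = 2" using r by auto
  have v6: "d 6 = 0 \<or> d 6 = 1 \<or> d 6 = 2" using r by auto
  have v7: "d 7 = 0 \<or> d 7 = 1 \<or> d 7 = 2" using r by auto
  have v8: "d 8 = 0 \<or> d 8 = 1 \<or> d 8 = 2" using r by auto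
  have v9: "d 9 = 0 \<or> d 9 = 1 \<or> d 9 = 2" using r by auto
  have v10: "d 10 = 0 \<or> d 10 = 1 \<or> d 10 = 2" using r by auto
  have v11: "d 11 = 0 \<or> d 11 = 1 \<or> d 11 = 2" using r by auto
  have v12: "d 12 = 0 \<or> d 12 = 1 \<or> d 12 = 2" using r by auto
  have v13: "d 13 = 0 \<or> d 13 = 1 \<or> d 13 = 2" using r by auto
  have v14: "d 14 = 0 \<or> d 14 = 1 \<or> d 14 = 2" using r by auto
  have v15: "d 15 = 0 \<or> d 15 = 1 \<or> d 15 = 2" using r by auto
  have e0: "\<not> (d 0 = 0 \<and> d 1 = 0) \<and> \<not> (d 0 = 1 \<and> d 1 = 1) \<and> \<not> (d 0 = 2 \<and> d 1 = 2)" using p by (auto simp: G5L_def)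
  have e1: "\<not> (d 0 = 0 \<and> d 2 = 0) \<and> \<not> (d 0 = 1 \<and> d 2 = 1) \<and> \<not> (d 0 = 2 \<and> d 2 = 2)" using p by (auto simp: G5L_def)
  have e2: "\<not> (d 0 = 0 \<and> d 4 = 0) \<and> \<not> (d 0 = 1 \<and> d 4 = 1) \<and> \<not> (d 0 = 2 \<and> d 4 = 2)" using p by (auto simp: G5L_def)
  have e3: "\<not> (d 1 = 0 \<and> d 3 = 0) \<and> \<not> (d 1 = 1 \<and> d 3 = 1) \<and> \<not> (d 1 = 2 \<and> d 3 = 2)" using p by (auto simp: G5L_def)
  have e4: "\<not> (d 1 = 0 \<and> d 6 = 0) \<and> \<not> (d 1 = 1 \<and> d 6 = 1) \<and> \<not> (d 1 = 2 \<and> d 6 = 2)" using p by (auto simp: G5L_def)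
  have e5: "\<not> (d 2 = 0 \<and> d 3 = 0) \<and> \<not> (d 2 = 1 \<and> d 3 = 1) \<and> \<not> (d 2 = 2 \<and> d 3 = 2)" using p by (auto simp: G5L_def)
  have e6: "\<not> (d 2 = 0 \<and> d 7 = 0) \<and> \<not> (d 2 = 1 \<and> d 7 = 1) \<and> \<not> (d 2 = 2 \<and> d 7 = 2)" using p by (auto simp: G5L_def)
  have e7: "\<not> (d 2 = 0 \<and> d 8 = 0) \<and> \<not> (d 2 = 1 \<and> d 8 = 1) \<and> \<not> (d 2 = 2 \<and> d 8 = 2)" using p by (auto simp: G5L_def)
  have e8: "\<not> (d 3 = 0 \<and> d 5 = 0) \<and> \<not> (d 3 = 1 \<and> d 5 = 1) \<and> \<not> (d 3 = 2 \<and> d 5 = 2)" using p by (auto simp: G5L_def)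
  have e9: "\<not> (d 4 = 0 \<and> d 5 = 0) \<and> \<not> (d 4 = 1 \<and> d 5 = 1) \<and> \<not> (d 4 = 2 \<and> d 5 = 2)" using p by (auto simp: G5L_def)
  have e10: "\<not> (d 4 = 0 \<and> d 6 = 0) \<and> \<not> (d 4 = 1 \<and> d 6 = 1) \<and> \<not> (d 4 = 2 \<and> d 6 = 2)" using p by (auto simp: G5L_def)
  have e11: "\<not> (d 5 = 0 \<and> d 11 = 0) \<and> \<not> (d 5 = 1 \<and> d 11 = 1) \<and> \<not> (d 5 = 2 \<and> d 11 = 2)" using p by (auto simp: G5L_def)
  have e12: "\<not> (d 5 = 0 \<and> d 15 = 0) \<and> \<not> (d 5 = 1 \<and> d 15 = 1) \<and> \<not> (d 5 = 2 \<and> d 15 = 2)" using p by (auto simp: G5L_def)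
  have e13: "\<not> (d 6 = 0 \<and> d 7 = 0) \<and> \<not> (d 6 = 1 \<and> d 7 = 1) \<and> \<not> (d 6 = 2 \<and> d 7 = 2)" using p by (auto simp: G5L_def)
  have e14: "\<not> (d 6 = 0 \<and> d 8 = 0) \<and> \<not> (d 6 = 1 \<and> d 8 = 1) \<and> \<not> (d 6 = 2 \<and> d 8 = 2)" using p by (auto simp: G5L_def)
  have e15: "\<not> (d 7 = 0 \<and> d 11 = 0) \<and> \<not> (d 7 = 1 \<and> d 11 = 1) \<and> \<not> (d 7 = 2 \<and> d 11 = 2)" using p by (auto simp: G5L_def)
  have e16: "\<not> (d 7 = 0 \<and> d 15 = 0) \<and> \<not> (d 7 = 1 \<and> d 15 = 1) \<and> \<not> (d 7 = 2 \<and> d 15 = 2)" using p by (auto simp: G5L_def)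
  have e17: "\<not> (d 9 = 0 \<and> d 10 = 0) \<and> \<not> (d 9 = 1 \<and> d 10 = 1) \<and> \<not> (d 9 = 2 \<and> d 10 = 2)" using p by (auto simp: G5L_def)
  have e18: "\<not> (d 9 = 0 \<and> d 11 = 0) \<and> \<not> (d 9 = 1 \<and> d 11 = 1) \<and> \<not> (d 9 = 2 \<and> d 11 = 2)" using p by (auto simp: G5L_def)
  have e19: "\<not> (d 9 = 0 \<and> d 13 = 0) \<and> \<not> (d 9 = 1 \<and> d 13 = 1) \<and> \<not> (d 9 = 2 \<and> d 13 = 2)" using p by (auto simp: G5L_def)
  have e20: "\<not> (d 10 = 0 \<and> d 12 = 0) \<and> \<not> (d 10 = 1 \<and> d 12 = 1) \<and> \<not> (d 10 = 2 \<and> d 12 = 2)" using p by (auto simp: G5L_def)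
  have e21: "\<not> (d 10 = 0 \<and> d 15 = 0) \<and> \<not> (d 10 = 1 \<and> d 15 = 1) \<and> \<not> (d 10 = 2 \<and> d 15 = 2)" using p by (auto simp: G5L_def)
  have e22: "\<not> (d 11 = 0 \<and> d 12 = 0) \<and> \<not> (d 11 = 1 \<and> d 12 = 1) \<and> \<not> (d 11 = 2 \<and> d 12 = 2)" using p by (auto simp: G5L_def)
  have e23: "\<not> (d 12 = 0 \<and> d 14 = 0) \<and> \<not> (d 12 = 1 \<and> d 14 = 1) \<and> \<not> (d 12 = 2 \<and> d 14 = 2)" using p by (auto simp: G5L_def)
  have e24: "\<not> (d 13 = 0 \<and> d 14 = 0) \<and> \<not> (d 13 = 1 \<and> d 14 = 1) \<and> \<not> (d 13 = 2 \<and> d 14 = 2)" using p by (auto simp: G5L_def)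
  have e25: "\<not> (d 13 = 0 \<and> d 15 = 0) \<and> \<not> (d 13 = 1 \<and> d 15 = 1) \<and> \<not> (d 13 = 2 \<and> d 15 = 2)" using p by (auto simp: G5L_def)
  have g: "(d 8 = 0 \<and> d 7 = 0) \<or> (d 8 = 1 \<and> d 7 = 1) \<or> (d 8 = 2 \<and> d 7 = 2) \<or> (d 8 = 0 \<and> d 14 = 0) \<or> (d 8 = 1 \<and> d 14 = 1) \<or> (d 8 = 2 \<and> d 14 = 2)"
    using v0 v1 v2 v3 v4 v5 v6 v7 v8 v9 v10 v11 v12 v13 v14 v15 e0 e1 e2 e3 e4 e5 e6 e7 e8 e9 e10 e11 e12 e13 e14 e15 e16 e17 e18 e19 e20 e21 e22 e23 e24 e25 by sat
  then show ?thesis by auto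
qed

definition CL :: "nat list" where "CL = [0,1,1,0,1,2,0,2,2,0,1,1,0,1,2,0,0,0,1,1,0,1,2,0,2,3,0,1,1,0,1,2,0,1]"

lemma col4: "colorable VV GE 4"
  unfolding colorable_def
proof (intro exI[of _ "\<lambda>x. CL ! x"] conjI)
  show "\<forall>x\<in>VV. CL ! x < 4" by (simp add: VV_def CL_def)
  have "\<forall>(a,b)\<in>set EL. CL ! a \<noteq> CL ! b" by (simp add: EL_def CL_def)
  then show "\<forall>x\<in>VV. \<forall>y\<in>VV. GE x y \<longrightarrow> CL ! x \<noteq> CL ! y" unfolding GE_def by auto
qed

lemma not_col3: "\<not> colorable VV GE 3"
proof
  assume "colorable VV GE 3"
  then obtain c :: "nat \<Rightarrow> nat" where c1: "\<forall>x\<in>VV. c x < 3"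
    and c2: "\<forall>x\<in>VV. \<forall>y\<in>VV. GE x y \<longrightarrow> c x \<noteq> c y"
    unfolding colorable_def by blast
  have inV: "\<forall>(a,b)\<in>set EL. a \<in> VV \<and> b \<in> VV" by (simp add: EL_def VV_def)
  have ed: "\<And>x y. (x,y) \<in> set EL \<Longrightarrow> c x \<noteq> c y"
  proof -
    fix x y assume xy: "(x,y) \<in> set EL"
    then have "x \<in> VV" "y \<in> VV" "GE x y" using inV unfolding GE_def by auto
    then show "c x \<noteq> c y" using c2 by blast
  qed
  have sub: "\<forall>(a,b)\<in>set G5L. (a,b) \<in> set EL \<and> (17+a,17+b) \<in> set EL" by (simp add: G5L_def EL_def)
  have i1: "\<forall>i\<in>{0,1,2,3,4,5,6,7,8,9,10,11,12,13,14,15}. i \<in> VV \<and> 17+i \<in> VV" by (simp add: VV_def)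
  have A: "c 8 = c 7 \<or> c 8 = c 14"
  proof (rule G5_rel)
    show "\<forall>i\<in>{0,1,2,3,4,5,6,7,8,9,10,11,12,13,14,15}. c i < 3" using c1 i1 by blast
    show "\<forall>(a,b)\<in>set G5L. c a \<noteq> c b" using sub ed by blast
  qed
  have B: "c (17+8) = c (17+7) \<or> c (17+8) = c (17+14)"
  proof (rule G5_rel[where d="\<lambda>i. c (17+i)"])
    show "\<forall>i\<in>{0,1,2,3,4,5,6,7,8,9,10,11,12,13,14,15}. c (17+i) < 3" using c1 i1 by blast
    show "\<forall>(a,b)\<in>set G5L. c (17+a) \<noteq> c (17+b)" using sub ed by blast
  qed
  have e: "c 16 \<noteq> c 7" "c 16 \<noteq> c 14" "c 33 \<noteq> c 24" "c 33 \<noteq> c 31"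
    "c 8 \<noteq> c 25" "c 8 \<noteq> c 33" "c 16 \<noteq> c 25" "c 16 \<noteq> c 33"
    by (rule ed; simp add: EL_def)+
  have r: "c 8 < 3" "c 16 < 3" "c 25 < 3" "c 33 < 3" using c1 by (simp_all add: VV_def)
  show False using A B e r by simp linarith
qed

lemma chrom: "chromatic_number VV GE = 4"
  unfolding chromatic_number_def
proof (rule Least_equality)
  show "colorable VV GE 4" by (rule col4)
next
  fix k assume k: "colorable VV GE k"
  show "4 \<le> k"
  proof (rule ccontr)
    assume "\<not> 4 \<le> k"
    then have "k \<le> 3" by simp
    then have "colorable VV GE 3" using k unfolding colorable_def by (meson order_less_le_trans)
    with not_col3 show False by blast
  qed
qed

lemma simple: "simple_graph VV GE"
proof -
  have f: "finite VV" by (simp add: VV_def)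
  have inV: "\<forall>(a,b)\<in>set EL. a \<in> VV \<and> b \<in> VV" by (simp add: EL_def VV_def)
  have a: "\<forall>x y. GE x y \<longrightarrow> x \<in> VV \<and> y \<in> VV" using inV unfolding GE_def by auto
  have b: "\<forall>x y. GE x y \<longrightarrow> GE y x" unfolding GE_def by blast
  have irr: "\<forall>(a,b)\<in>set EL. a \<noteq> b" by (simp add: EL_def)
  then have c: "\<forall>x. \<not> GE x x" unfolding GE_def by blast
  show ?thesis unfolding simple_graph_def using f a b c by blast
qed

definition NBL :: "nat list list" where "NBL = [[1,2,4], [0,3,6], [0,3,7,8], [1,2,5], [0,5,6], [3,4,11,15], [1,4,7,8], [2,6,11,15,16], [2,6,25,33], [10,11,13], [9,12,15], [5,7,9,12], [10,11,14], [9,14,15], [12,13,16], [5,7,10,13], [7,14,25,33], [18,19,21], [17,20,23], [17,20,24,25], [18,19,22], [17,22,23], [20,21,28,32], [18,21,24,25], [19,23,28,32,33], [8,16,19,23], [27,28,30], [26,29,32], [22,24,26,29], [27,28,31], [26,31,32], [29,30,33], [22,24,27,30], [8,16,24,31]]"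

lemma tri: "triangle_free VV GE"
proof -
  have H: "\<forall>(a,b)\<in>set EL. b \<in> set (NBL ! a) \<and> a \<in> set (NBL ! b) \<and> set (NBL ! a) \<inter> set (NBL ! b) = {}"
    by (simp add: EL_def NBL_def)
  have N: "\<And>a b. GE a b \<Longrightarrow> b \<in> set (NBL ! a)" using H unfolding GE_def by auto
  have H2: "\<And>a b. GE a b \<Longrightarrow> set (NBL ! a) \<inter> set (NBL ! b) = {}"
  proof -
    fix a b assume "GE a b"
    then have "(a,b) \<in> set EL \<or> (b,a) \<in> set EL" unfolding GE_def .
    then show "set (NBL ! a) \<inter> set (NBL ! b) = {}" using H by (auto simp: Int_commute)
  qed
  show ?thesis unfolding triangle_free_def
  proof (intro notI, elim bexE conjE)
    fix x y z assume "GE x y" "GE y z" "GE x z"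
    then have "z \<in> set (NBL ! x)" "z \<in> set (NBL ! y)" "set (NBL ! x) \<inter> set (NBL ! y) = {}"
      using H2[of x y] N by auto
    then show False by blast
  qed
qed

theorem mainTheorem6:
  shows "\<exists>(V :: nat set) E. simple_graph V E \<and> fragile V E \<and> triangle_free V E
           \<and> chromatic_number V E = 4"
  using simple frag_main tri chrom by blast

end
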